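(* For all sufficiently large $n$, there is a covering $3$-colouring of the edges of $K_n^{(4)}$ with no $5$-set of vertices whose $4$-subsets receive all three colours.
   Context: $K_n^{(4)}$ is the complete $4$-uniform hypergraph on $n$ vertices (edges are all $4$-subsets). A $4$-uniform hypergraph on vertex set $V$ is a covering if every $3$-subset of $V$ is contained in some edge. A colouring of the edges of $K_n^{(4)}$ is covering if for each colour, the $4$-graph on all $n$ vertices formed by the edges of that colour is a covering. *)

theory Defs
  imports Main
begin

(* Vertex set of K_n^(4) is {..<n}; its edges are the 4-subsets.
   An edge colouring with k colours is a function c on sets taking values in {..<k}
   on every edge (values off edges are irrelevant). *)

definition edges4 :: "nat \<Rightarrow> nat set set" where
  "edges4 n = {e. e \<subseteq> {..<n} \<and> card e = 4}"

definition is_colouring :: "nat \<Rightarrow> nat \<Rightarrow> (nat set \<Rightarrow> nat) \<Rightarrow> bool" where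
  "is_colouring n k c \<longleftrightarrow> (\<forall>e \<in> edges4 n. c e < k)"

definition is_covering :: "nat \<Rightarrow> nat set set \<Rightarrow> bool" where
  "is_covering n H \<longleftrightarrow>
     (\<forall>T. T \<subseteq> {..<n} \<and> card T = 3 \<longrightarrow> (\<exists>e \<in> H. T \<subseteq> e))"

definition covering_colouring :: "nat \<Rightarrow> nat \<Rightarrow> (nat set \<Rightarrow> nat) \<Rightarrow> bool" where
  "covering_colouring n k c \<longleftrightarrow> is_colouring n k c \<and>
     (\<forall>i < k. is_covering n {e \<in> edges4 n. c e = i})"

end

theory Submission
  imports Defs
begin

definition fci :: "int \<Rightarrow> int \<Rightarrow> int" where
 "fci d1 d2 = (if d1 = 4 then 0 else if d1 = 6 then (if d2 = 4 then 1 else 2)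
   else if d1 = 10 then (if d2 = 4 then 0 else 1)
   else if d1 = 8 then (if d2 = 4 then 2 else if d2 = 6 then 1 else 0)
   else (if d2 = 4 then 2 else if d2 = 6 then 1 else if d2 = 10 then 0 else 2))"

definition dg :: "(nat \<Rightarrow> nat) \<Rightarrow> nat set \<Rightarrow> int" where
 "dg f e = (\<Sum>x\<in>e. \<Sum>y\<in>e. if f x = f y then 1 else 0)"

definition cgi :: "(nat \<Rightarrow> nat) \<Rightarrow> (nat \<Rightarrow> nat) \<Rightarrow> nat set \<Rightarrow> int" where
 "cgi sp cl e = fci (dg sp e) (dg cl e)"

lemma dg4: "distinct [a,b,c,d] \<Longrightarrow> dg f {a,b,c,d} =
  4 + 2 * ((if f a = f b then 1 else 0) + (if f a = f c then 1 else 0) + (if f a = f d then 1 else 0)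
   + (if f b = f c then 1 else 0) + (if f b = f d then 1 else 0) + (if f c = f d then 1 else 0))"
  unfolding dg_def by (auto simp: eq_commute)

lemma five:
  assumes dist: "distinct [a,b,c,d,e]" and cs: "\<And>x y. cl x = cl y \<Longrightarrow> sp x = sp y"
  shows "\<not> (0 \<in> cgi sp cl ` {{b,c,d,e},{a,c,d,e},{a,b,d,e},{a,b,c,e},{a,b,c,d}} \<and>
             1 \<in> cgi sp cl ` {{b,c,d,e},{a,c,d,e},{a,b,d,e},{a,b,c,e},{a,b,c,d}} \<and>
             2 \<in> cgi sp cl ` {{b,c,d,e},{a,c,d,e},{a,b,d,e},{a,b,c,e},{a,b,c,d}})"
proof -
  have h: "sp a = sp b" if "cl a = cl b" for a b using cs that .
  have d: "distinct [b,c,d,e]" "distinct [a,c,d,e]" "distinct [a,b,d,e]" "distinct [a,b,c,e]" "distinct [a,b,c,d]"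
    using dist by auto
  note q = d[THEN dg4[where f=sp]] d[THEN dg4[where f=cl]]
  show ?thesis
  unfolding image_insert image_empty insert_iff empty_iff cgi_def q
  using h[of a b] h[of a c] h[of a d] h[of a e] h[of b c] h[of b d] h[of b e] h[of c d] h[of c e] h[of d e]
  unfolding fci_def
  by (smt (z3))
qed

lemma cov:
  assumes dist: "distinct [a,b,c]" and cs: "\<And>x y. cl x = cl y \<Longrightarrow> sp x = sp y"
  and xa: "cl xa = cl a" "xa \<notin> {a,b,c}"
  and xb: "cl xb = cl b" "xb \<notin> {a,b,c}"
  and xc: "cl xc = cl c" "xc \<notin> {a,b,c}"
  and ya: "sp ya = sp a" "cl ya \<notin> {cl a, cl b, cl c}"
  and yb: "sp yb = sp b" "cl yb \<notin> {cl a, cl b, cl c}"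
  and yc: "sp yc = sp c" "cl yc \<notin> {cl a, cl b, cl c}"
  and z: "sp z \<notin> {sp a, sp b, sp c}"
  and k: "k \<in> {0,1,2}"
  shows "k \<in> cgi sp cl ` {{a,b,c,xa},{a,b,c,xb},{a,b,c,xc},{a,b,c,ya},{a,b,c,yb},{a,b,c,yc},{a,b,c,z}}"
proof -
  have h: "sp a = sp b" if "cl a = cl b" for a b using cs that .
  have d: "distinct [a,b,c,xa]" "distinct [a,b,c,xb]" "distinct [a,b,c,xc]"
     "distinct [a,b,c,ya]" "distinct [a,b,c,yb]" "distinct [a,b,c,yc]" "distinct [a,b,c,z]"
    using dist xa xb xc ya yb yc z by auto
  note q = d[THEN dg4[where f=sp]] d[THEN dg4[where f=cl]]
  show ?thesis
  using k xa xb xc ya yb yc z h[of a b] h[of a c] h[of b c] h[of xa b] h[of xa c] h[of xb a] h[of xb c] h[of xc a] h[of xc b]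
    h[of ya b] h[of ya c] h[of yb a] h[of yb c] h[of yc a] h[of yc b]  h[of a xa] h[of b xb] h[of c xc] h[of z a] h[of z b] h[of z c] h[of xa a] h[of xb b] h[of xc c]
  unfolding image_insert image_empty insert_iff empty_iff cgi_def q fci_def
  by (smt (z3))
qed

lemma fci_range: "fci d1 d2 \<in> {0,1,2}"
  unfolding fci_def by auto

lemma pick: assumes "finite X" "card X \<le> 3" "finite W" "card W \<ge> 4" shows "\<exists>w\<in>W. w \<notin> X"
proof (rule ccontr)
  assume "\<not> ?thesis" then have "W \<subseteq> X" by auto
  then have "card W \<le> card X" using assms(1) card_mono by blast
  then show False using assms by simp
qed

lemma card3le: "card {x, y, z::'a} \<le> 3"
proof -
  have "card {x, y, z} \<le> Suc (card {y, z})" by (rule card_insert_le_m1) simp_all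
  moreover have "card {y, z} \<le> Suc (card {z})" by (rule card_insert_le_m1) simp_all
  ultimately show ?thesis by simp
qed

lemma m16: assumes "(r::nat) < 16" shows "(r + 16) mod 16 = r" "(r + 32) mod 16 = r" "(r + 48) mod 16 = r"
  using mod_mult_self1[of r 1 16] mod_mult_self1[of r 2 16] mod_mult_self1[of r 3 16] assms by simp_all

lemma m4: assumes "(r::nat) < 4" shows "(r + 4) mod 4 = r" "(r + 8) mod 4 = r" "(r+12) mod 4 = r"
  using mod_mult_self1[of r 1 4] mod_mult_self1[of r 2 4] mod_mult_self1[of r 3 4] assms by simp_all

lemma card3E: assumes "card T = 3" obtains a b c where "T = {a,b,c}" "distinct [a,b,c]"
  using assms by (auto simp: card_Suc_eq numeral_eq_Suc)

lemma card5E: assumes "card S = 5" obtains a b c d e where "S = {a,b,c,d,e}" "distinct [a,b,c,d,e]"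
proof -
  have "card S = Suc 4" using assms by simp
  then obtain a R1 where 1: "S = insert a R1" "a \<notin> R1" "card R1 = 4" unfolding card_Suc_eq by blast
  have "card R1 = Suc 3" using 1(3) by simp
  then obtain b R2 where 2: "R1 = insert b R2" "b \<notin> R2" "card R2 = 3" unfolding card_Suc_eq by blast
  from 2(3) obtain c d e where 3: "R2 = {c,d,e}" "distinct [c,d,e]" using card3E by blast
  have "S = {a,b,c,d,e}" using 1 2 3 by auto
  moreover have "distinct [a,b,c,d,e]" using 1 2 3 by auto
  ultimately show ?thesis by (rule that)
qed

lemma mod16_4: "(x::nat) mod 16 = y mod 16 \<Longrightarrow> x mod 4 = y mod 4"
proof -
  assume h: "x mod 16 = y mod 16"
  have "x mod 4 = x mod 16 mod 4" "y mod 4 = y mod 16 mod 4" by (simp_all add: mod_mod_cancel)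
  then show ?thesis using h by simp
qed

abbreviation "SP \<equiv> (\<lambda>v::nat. v mod 4)"
abbreviation "CL \<equiv> (\<lambda>v::nat. v mod 16)"

lemma covering_part:
  assumes n: "n \<ge> 64" and T: "T \<subseteq> {..<n}" "card T = 3" and k: "k \<in> {0,1,2}"
  shows "\<exists>e \<in> edges4 n. cgi SP CL e = k \<and> T \<subseteq> e"
proof -
  obtain a b c where abc: "T = {a,b,c}" "distinct [a,b,c]" using card3E T(2) by blast
  have lt: "a < n" "b < n" "c < n" using T(1) abc(1) by auto
  have fx: "\<exists>w. w < 64 \<and> CL w = CL t \<and> w \<notin> {a,b,c}" for t
  proof -
    define r where "r = t mod 16"
    have r: "r < 16" unfolding r_def by simp
    have "card {r, r+16, r+32, r+48} = 4" by simp
    have "\<exists>w\<in>{r, r+16, r+32, r+48}. w \<notin> {a,b,c}"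
      by (rule pick) (simp_all add: card3le)
    then obtain w where w: "w \<in> {r, r+16, r+32, r+48}" "w \<notin> {a,b,c}" by blast
    have "w < 64" "w mod 16 = r" using w(1) r m16[OF r] by auto
    then show ?thesis using w(2) r_def by auto
  qed
  have fy: "\<exists>w. w < 64 \<and> SP w = SP t \<and> CL w \<notin> {CL a, CL b, CL c}" for t
  proof -
    define r where "r = t mod 4"
    have r: "r < 4" unfolding r_def by simp
    have "card {r, r+4, r+8, r+12} = 4" by simp
    have "\<exists>w\<in>{r, r+4, r+8, r+12}. w \<notin> {CL a, CL b, CL c}"
      by (rule pick) (simp_all add: card3le)
    then obtain w where w: "w \<in> {r, r+4, r+8, r+12}" "w \<notin> {CL a, CL b, CL c}" by blast
    have h3: "w < 16" "w mod 4 = r" "w mod 16 = w" using w(1) r m4[OF r] by auto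
    show ?thesis using h3 w(2) r_def by (intro exI[of _ w]) auto
  qed
  have fz: "\<exists>w. w < 64 \<and> SP w \<notin> {SP a, SP b, SP c}"
  proof -
    have "card {0::nat,1,2,3} = 4" by simp
    have "\<exists>w\<in>{0::nat,1,2,3}. w \<notin> {SP a, SP b, SP c}"
      by (rule pick) (simp_all add: card3le)
    then obtain w where w: "w \<in> {0::nat,1,2,3}" "w \<notin> {SP a, SP b, SP c}" by blast
    have h3: "w < 4" "w mod 4 = w" using w(1) by auto
    show ?thesis using h3 w(2) by (intro exI[of _ w]) auto
  qed
  obtain xa where xa: "xa < 64" "CL xa = CL a" "xa \<notin> {a,b,c}" using fx by blast
  obtain xb where xb: "xb < 64" "CL xb = CL b" "xb \<notin> {a,b,c}" using fx by blast
  obtain xc where xc: "xc < 64" "CL xc = CL c" "xc \<notin> {a,b,c}" using fx by blast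
  obtain ya where ya: "ya < 64" "SP ya = SP a" "CL ya \<notin> {CL a, CL b, CL c}" using fy by blast
  obtain yb where yb: "yb < 64" "SP yb = SP b" "CL yb \<notin> {CL a, CL b, CL c}" using fy by blast
  obtain yc where yc: "yc < 64" "SP yc = SP c" "CL yc \<notin> {CL a, CL b, CL c}" using fy by blast
  obtain z where z: "z < 64" "SP z \<notin> {SP a, SP b, SP c}" using fz by blast
  have "k \<in> cgi SP CL ` {{a,b,c,xa},{a,b,c,xb},{a,b,c,xc},{a,b,c,ya},{a,b,c,yb},{a,b,c,yc},{a,b,c,z}}"
    by (rule cov[where sp=SP and cl=CL, OF abc(2) mod16_4 xa(2,3) xb(2,3) xc(2,3) ya(2,3) yb(2,3) yc(2,3) z(2) k])
  then obtain w where w: "w \<in> {xa,xb,xc,ya,yb,yc,z}" "cgi SP CL {a,b,c,w} = k" by auto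
  have wn: "w \<notin> {a,b,c}" "w < 64" using w(1) xa xb xc ya yb yc z by auto
  have "card {a,b,c,w} = 4" using wn abc(2) by auto
  moreover have "{a,b,c,w} \<subseteq> {..<n}" using wn lt n by auto
  ultimately have "{a,b,c,w} \<in> edges4 n" unfolding edges4_def by auto
  then show ?thesis using w(2) abc(1) by blast
qed

lemma four_subsets:
  assumes "S = {a,b,c,d,e}" "distinct [a,b,c,d,e]" "f \<subseteq> S" "card f = 4"
  shows "f \<in> {{b,c,d,e},{a,c,d,e},{a,b,d,e},{a,b,c,e},{a,b,c,d}}"
proof -
  have fin: "finite S" using assms(1) by simp
  have cS: "card S = 5" using assms(1,2) by simp
  have "card (S - f) = 1" using card_Diff_subset[OF finite_subset[OF assms(3) fin] assms(3)] cS assms(4) by simp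
  then obtain x where x: "S - f = {x}" by (auto simp: card_Suc_eq)
  then have "f = S - {x}" "x \<in> S" using assms(3) by auto
  then show ?thesis using assms(1,2) by auto
qed

theorem lemma16:
  shows "\<exists>N. \<forall>n \<ge> N. \<exists>c. covering_colouring n 3 c \<and>
           \<not> (\<exists>S. S \<subseteq> {..<n} \<and> card S = 5 \<and>
                 c ` {e. e \<subseteq> S \<and> card e = 4} = {0, 1, 2})"
proof (rule exI[of _ 64], intro allI impI)
  fix n :: nat assume n: "64 \<le> n"
  define c where "c = (\<lambda>e. nat (cgi SP CL e))"
  have rng: "cgi SP CL e \<in> {0,1,2}" for e unfolding cgi_def using fci_range by blast
  have "nat (cgi SP CL e) < 3" for e using rng[of e] by auto
  then have col: "is_colouring n 3 c" unfolding is_colouring_def c_def by blast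
  have cov: "is_covering n {e \<in> edges4 n. c e = i}" if "i < 3" for i
    unfolding is_covering_def
  proof (intro allI impI)
    fix T assume T: "T \<subseteq> {..<n} \<and> card T = 3"
    have "int i \<in> {0,1,2}" using that by auto
    then obtain e where "e \<in> edges4 n" "cgi SP CL e = int i" "T \<subseteq> e"
      using covering_part[OF n] T by blast
    then show "\<exists>e\<in>{e \<in> edges4 n. c e = i}. T \<subseteq> e" unfolding c_def by auto
  qed
  have no5: "\<not> (\<exists>S. S \<subseteq> {..<n} \<and> card S = 5 \<and> c ` {e. e \<subseteq> S \<and> card e = 4} = {0, 1, 2})"
  proof
    assume "\<exists>S. S \<subseteq> {..<n} \<and> card S = 5 \<and> c ` {e. e \<subseteq> S \<and> card e = 4} = {0, 1, 2}"
    then obtain S where S: "card S = 5" "c ` {e. e \<subseteq> S \<and> card e = 4} = {0, 1, 2}" by blast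
    obtain a b cc d e where ab: "S = {a,b,cc,d,e}" "distinct [a,b,cc,d,e]" using card5E[OF S(1)] by blast
    let ?F = "{{b,cc,d,e},{a,cc,d,e},{a,b,d,e},{a,b,cc,e},{a,b,cc,d}}"
    have sub: "{e. e \<subseteq> S \<and> card e = 4} \<subseteq> ?F"
    proof
      fix f assume "f \<in> {e. e \<subseteq> S \<and> card e = 4}"
      then show "f \<in> ?F" using four_subsets[OF ab] by simp
    qed
    have inF: "int j \<in> cgi SP CL ` ?F" if "j \<in> {0,1,2}" for j
    proof -
      have img: "c ` {e. e \<subseteq> S \<and> card e = 4} \<subseteq> c ` ?F" using sub by (rule image_mono)
      have j1: "j \<in> c ` {e. e \<subseteq> S \<and> card e = 4}" using S(2) that by simp
      have "j \<in> c ` ?F" using subsetD[OF img j1] .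
      then obtain f where f: "f \<in> ?F" "nat (cgi SP CL f) = j" unfolding c_def by blast
      have "cgi SP CL f = int j" using f(2) rng[of f] by auto
      then show ?thesis using f(1) by force
    qed
    have h0: "0 \<in> cgi SP CL ` ?F" using inF[of 0] by simp
    have h1: "1 \<in> cgi SP CL ` ?F" using inF[of 1] by simp
    have h2: "2 \<in> cgi SP CL ` ?F" using inF[of 2] by simp
    have nf: "\<not> (0 \<in> cgi SP CL ` ?F \<and> 1 \<in> cgi SP CL ` ?F \<and> 2 \<in> cgi SP CL ` ?F)"
      by (rule five[where sp=SP and cl=CL, OF ab(2) mod16_4])
    have "0 \<in> cgi SP CL ` ?F \<and> 1 \<in> cgi SP CL ` ?F \<and> 2 \<in> cgi SP CL ` ?F"
      using h0 h1 h2 by (intro conjI)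
    with nf show False by (rule notE)
  qed
  show "\<exists>c. covering_colouring n 3 c \<and> \<not> (\<exists>S. S \<subseteq> {..<n} \<and> card S = 5 \<and> c ` {e. e \<subseteq> S \<and> card e = 4} = {0, 1, 2})"
    using col cov no5 unfolding covering_colouring_def by blast
qed

end
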